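(* Let $A_1,\dots,A_k$ be $2\times2$ real matrices with all entries strictly positive and norm $<1$, $d_i\in\mathbb R^2$, $T_i(x)=A_ix+d_i$, with $T_i(D)\subset D$ for all $i$ ($D$ the closed unit disc). There exists a constant $C$ such that for all $\theta,\theta'\in\mathcal Q_2$, all $n\in\mathbb N$ and all $\underline a\in\Sigma=\{1,\dots,k\}^{\mathbb N}$, \[ |a_1\cdots a_n|_\theta-|a_1\cdots a_n|_{\theta'}\le C\,|\theta-\theta'|. \]
   Context: $\mathbb{PR}^1$ is the space of lines through the origin, parametrised by the angle $\theta$ with the horizontal axis, and $|\theta-\theta'|$ is the angular distance. $\mathcal Q_2\subset\mathbb{PR}^1$ is the closed set of lines contained in the union of the closed second and fourth quadrants. For $\theta\in\mathbb{PR}^1$, $\pi_\theta$ is orthogonal projection onto the line through the origin perpendicular to $\theta$. For a word $w=a_1\cdots a_n$, $D_w=T_{a_1}\circ\cdots\circ T_{a_n}(D)$ and $|w|_\theta=-\log_2(|\pi_\theta(D_w)|/2)$, where $|\cdot|$ is the length of an interval. *)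

theory Defs
  imports "HOL-Analysis.Analysis"
begin

text \<open>Lines through the origin are parametrised by a real angle theta; the line is
spanned by (cos theta, sin theta). Angles differing by a multiple of pi give the same line.\<close>

definition dirvec :: "real \<Rightarrow> real^2" where
  "dirvec \<theta> = vector [cos \<theta>, sin \<theta>]"

definition normvec :: "real \<Rightarrow> real^2" where
  "normvec \<theta> = vector [- sin \<theta>, cos \<theta>]"

definition angdist :: "real \<Rightarrow> real \<Rightarrow> real" where
  "angdist \<theta> \<theta>' = (INF k::int. \<bar>\<theta> - \<theta>' - of_int k * pi\<bar>)"

text \<open>Q_2: lines contained in the union of the closed second and fourth quadrants.\<close>
definition Q2 :: "real set" where
  "Q2 = {\<theta>. \<forall>t::real. (t * cos \<theta> \<le> 0 \<and> t * sin \<theta> \<ge> 0) \<or> (t * cos \<theta> \<ge> 0 \<and> t * sin \<theta> \<le> 0)}"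

definition proj_perp :: "real \<Rightarrow> real^2 \<Rightarrow> real^2" where
  "proj_perp \<theta> x = (x \<bullet> normvec \<theta>) *\<^sub>R normvec \<theta>"

definition Disc :: "(real^2) set" where
  "Disc = cball 0 1"

definition affT :: "(nat \<Rightarrow> real^2^2) \<Rightarrow> (nat \<Rightarrow> real^2) \<Rightarrow> nat \<Rightarrow> real^2 \<Rightarrow> real^2" where
  "affT A d i x = A i *v x + d i"

definition Dword :: "(nat \<Rightarrow> real^2^2) \<Rightarrow> (nat \<Rightarrow> real^2) \<Rightarrow> nat list \<Rightarrow> (real^2) set" where
  "Dword A d w = foldr (\<lambda>i f. affT A d i \<circ> f) w id ` Disc"

text \<open>|w|_theta = - log_2 (|pi_theta(D_w)| / 2); the length of the interval is its diameter.\<close>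
definition wlen :: "(nat \<Rightarrow> real^2^2) \<Rightarrow> (nat \<Rightarrow> real^2) \<Rightarrow> nat list \<Rightarrow> real \<Rightarrow> real" where
  "wlen A d w \<theta> = - log 2 (diameter (proj_perp \<theta> ` Dword A d w) / 2)"

end

theory Submission
  imports Defs
begin

fun mp :: "(nat \<Rightarrow> real^2^2) \<Rightarrow> nat list \<Rightarrow> real^2^2" where
  "mp A [] = mat 1" | "mp A (i#w) = A i ** mp A w"
fun cv :: "(nat \<Rightarrow> real^2^2) \<Rightarrow> (nat \<Rightarrow> real^2) \<Rightarrow> nat list \<Rightarrow> real^2" where
  "cv A d [] = 0" | "cv A d (i#w) = A i *v cv A d w + d i"

lemma fold_aff: "foldr (\<lambda>i f. affT A d i \<circ> f) w id = (\<lambda>x. mp A w *v x + cv A d w)"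
  by (induction w) (auto simp: affT_def matrix_vector_mul_assoc matrix_vector_right_distrib)

lemma norm_normvec: "norm (normvec t) = 1"
proof -
  have "normvec t \<bullet> normvec t = 1" by (simp add: normvec_def inner_vec_def sum_2 power2_eq_square[symmetric])
  then show ?thesis by (metis norm_eq_sqrt_inner real_sqrt_one)
qed

lemma diam_proj:
  fixes M :: "real^2^2" and c n :: "real^2"
  assumes n1: "norm n = 1"
  shows "diameter ((\<lambda>x. ((M *v x + c) \<bullet> n) *\<^sub>R n) ` cball 0 1) = 2 * norm (n v* M)"
proof -
  let ?p = "\<lambda>x. ((M *v x + c) \<bullet> n) *\<^sub>R n"
  have key: "norm (?p x - ?p y) = \<bar>(x - y) \<bullet> (n v* M)\<bar>" for x y
  proof -
    have "?p x - ?p y = ((M *v (x - y)) \<bullet> n) *\<^sub>R n"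
      by (simp add: matrix_vector_mult_diff_distrib inner_diff_left algebra_simps)
    also have "(M *v (x - y)) \<bullet> n = (x - y) \<bullet> (n v* M)"
      by (metis dot_lmul_matrix inner_commute)
    finally show ?thesis using n1 by simp
  qed
  have le: "diameter (?p ` cball 0 1) \<le> 2 * norm (n v* M)"
  proof (rule diameter_le)
    show "?p ` cball 0 1 \<noteq> {} \<or> 0 \<le> 2 * norm (n v* M)" by simp
    fix u v assume "u \<in> ?p ` cball 0 1" "v \<in> ?p ` cball 0 1"
    then obtain x y where x: "norm x \<le> 1" "u = ?p x" and y: "norm y \<le> 1" "v = ?p y" by auto
    have "\<bar>(x - y) \<bullet> (n v* M)\<bar> \<le> norm (x - y) * norm (n v* M)" by (rule Cauchy_Schwarz_ineq2)
    also have "norm (x - y) \<le> 2" using x y norm_triangle_ineq4[of x y] by linarith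
    then have "norm (x - y) * norm (n v* M) \<le> 2 * norm (n v* M)" by (simp add: mult_right_mono)
    finally show "norm (u - v) \<le> 2 * norm (n v* M)" using key x y by simp
  qed
  have bd: "bounded (?p ` cball 0 1)"
    by (intro compact_imp_bounded compact_continuous_image compact_cball) (intro continuous_intros)
  have ge: "2 * norm (n v* M) \<le> diameter (?p ` cball 0 1)"
  proof (cases "n v* M = 0")
    case True then show ?thesis by (simp add: diameter_ge_0 bd)
  next
    case False
    define y where "y = (1 / norm (n v* M)) *\<^sub>R (n v* M)"
    have ny: "norm y = 1" using False by (simp add: y_def)
    have "dist (?p y) (?p (-y)) \<le> diameter (?p ` cball 0 1)"
      using ny by (intro diameter_bounded_bound bd) auto
    moreover have "dist (?p y) (?p (-y)) = 2 * norm (n v* M)"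
    proof -
      have "(y - - y) \<bullet> (n v* M) = 2 * norm (n v* M)"
      proof -
        have "y - - y = 2 *\<^sub>R y" by (simp add: scaleR_2)
        then have "(y - - y) \<bullet> (n v* M) = 2 * ((1 / norm (n v* M)) * ((n v* M) \<bullet> (n v* M)))"
          by (simp add: y_def inner_scaleR_left)
        also have "(n v* M) \<bullet> (n v* M) = norm (n v* M) * norm (n v* M)"
          by (simp add: power2_norm_eq_inner[symmetric] power2_eq_square)
        finally show ?thesis using False by simp
      qed
      then show ?thesis by (simp only: dist_norm key) simp
    qed
    ultimately show ?thesis by simp
  qed
  show ?thesis using le ge by simp
qed

lemma wlen_eq: "wlen A d w t = - log 2 (norm (normvec t v* mp A w))"
proof -
  have "proj_perp t ` Dword A d w = (\<lambda>x. ((mp A w *v x + cv A d w) \<bullet> normvec t) *\<^sub>R normvec t) ` cball 0 1"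
    by (simp add: Dword_def fold_aff Disc_def proj_perp_def image_image)
  then show ?thesis by (simp add: wlen_def diam_proj norm_normvec)
qed

definition KK :: "(nat \<Rightarrow> real^2^2) \<Rightarrow> nat \<Rightarrow> real" where
  "KK A k = (\<Sum>(i,r,c,r',c') \<in> {1..k} \<times> (UNIV::2 set) \<times> (UNIV::2 set) \<times> (UNIV::2 set) \<times> (UNIV::2 set).
      A i $ r $ c / A i $ r' $ c')"

lemma norm_mono2:
  fixes x y :: "real^2"
  assumes "\<And>c. 0 \<le> x $ c" "\<And>c. x $ c \<le> y $ c"
  shows "norm x \<le> norm y"
proof -
  have "(\<Sum>c\<in>UNIV. x $ c * x $ c) \<le> (\<Sum>c\<in>UNIV. y $ c * y $ c)"
  proof (rule sum_mono)
    fix c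
    have "0 \<le> y $ c" using assms[of c] by linarith
    then show "x $ c * x $ c \<le> y $ c * y $ c" using assms[of c] by (intro mult_mono) auto
  qed
  then show ?thesis by (simp add: norm_le inner_vec_def)
qed

lemma vmult2: "(x::real^2) v* M = x $ 1 *\<^sub>R M $ 1 + x $ 2 *\<^sub>R M $ 2"
  by (simp add: vec_eq_iff vector_matrix_mult_def sum_2)

lemma unit_sum_ge1:
  fixes y :: "real^2" assumes "norm y = 1" "\<And>c. 0 \<le> y $ c"
  shows "1 \<le> y $ 1 + y $ 2"
proof -
  have "y \<bullet> y = 1" using assms(1) by (simp add: norm_eq_1)
  then have a: "(y $ 1)^2 + (y $ 2)^2 = 1" by (simp add: inner_vec_def sum_2 power2_eq_square)
  have b: "0 \<le> y $ 1 * y $ 2" using assms(2) by simp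
  have "(y $ 1 + y $ 2)^2 = (y $ 1)^2 + (y $ 2)^2 + 2 * (y $ 1) * (y $ 2)" by (rule power2_sum)
  then have "1 \<le> (y $ 1 + y $ 2)^2" using a b by linarith
  moreover have "0 \<le> y $ 1 + y $ 2" using assms(2)[of 1] assms(2)[of 2] by linarith
  ultimately show ?thesis using power2_le_imp_le[of 1 "y $ 1 + y $ 2"] by simp
qed

context
  fixes A :: "nat \<Rightarrow> real^2^2" and k :: nat
  assumes pos: "\<And>i r c. i \<in> {1..k} \<Longrightarrow> A i $ r $ c > 0"
begin

lemma KK_ratio:
  assumes i: "i \<in> {1..k}"
  shows "A i $ r $ c / A i $ r' $ c' \<le> KK A k"
proof -
  let ?f = "\<lambda>(i,r,c,r',c'). A i $ r $ c / A i $ r' $ c'"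
  let ?S = "{1..k} \<times> (UNIV::2 set) \<times> (UNIV::2 set) \<times> (UNIV::2 set) \<times> (UNIV::2 set)"
  have "?f (i,r,c,r',c') \<le> sum ?f ?S"
  proof (rule member_le_sum)
    show "(i,r,c,r',c') \<in> ?S" using i by simp
    show "finite ?S" by simp
    fix x assume "x \<in> ?S - {(i,r,c,r',c')}"
    then show "0 \<le> ?f x" using pos by (auto intro!: divide_nonneg_pos less_imp_le)
  qed
  then show ?thesis by (simp add: KK_def)
qed

lemma KK_ge1:
  assumes i: "i \<in> {1..k}"
  shows "1 \<le> KK A k"
  using KK_ratio[OF i, where r=1 and c=1 and r'=1 and c'=1] pos[OF i, of 1 1] by simp

lemma mp_nonneg:
  assumes w: "set w \<subseteq> {1..k}"
  shows "(\<forall>r c. 0 \<le> mp A w $ r $ c) \<and> (\<forall>r. 0 < mp A w $ r $ 1 + mp A w $ r $ 2)"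
  using w
proof (induction w)
  case Nil
  show ?case by (auto simp: mat_def forall_2)
next
  case (Cons i w)
  let ?P = "mp A w"
  have i: "i \<in> {1..k}" and IH: "(\<forall>r c. 0 \<le> ?P $ r $ c) \<and> (\<forall>r. 0 < ?P $ r $ 1 + ?P $ r $ 2)"
    using Cons by auto
  have e: "(A i ** ?P) $ r $ c = A i $ r $ 1 * ?P $ 1 $ c + A i $ r $ 2 * ?P $ 2 $ c" for r c
    by (simp add: matrix_matrix_mult_def sum_2)
  have nn: "0 \<le> (A i ** ?P) $ r $ c" for r c
    unfolding e using IH pos[OF i] by (intro add_nonneg_nonneg mult_nonneg_nonneg) (auto intro: less_imp_le)
  have "0 < A i $ r $ 1 * (?P $ 1 $ 1 + ?P $ 1 $ 2) + A i $ r $ 2 * (?P $ 2 $ 1 + ?P $ 2 $ 2)" for r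
  proof (rule add_pos_pos)
    show "0 < A i $ r $ 1 * (?P $ 1 $ 1 + ?P $ 1 $ 2)" by (rule mult_pos_pos) (use IH pos[OF i] in auto)
    show "0 < A i $ r $ 2 * (?P $ 2 $ 1 + ?P $ 2 $ 2)" by (rule mult_pos_pos) (use IH pos[OF i] in auto)
  qed
  then have "0 < (A i ** ?P) $ r $ 1 + (A i ** ?P) $ r $ 2" for r
    unfolding e by (simp add: algebra_simps)
  then show ?case using nn by simp
qed

lemma mp_rows:
  assumes w: "set w \<subseteq> {1..k}" and k: "1 \<le> k"
  shows "norm (mp A w $ j) \<le> KK A k * norm (mp A w $ j')"
proof (cases w)
  case Nil
  have "1 \<le> KK A k" using KK_ge1[where i=1] k by simp
  moreover have "norm (mat 1 $ j :: real^2) = 1" for j :: 2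
    using exhaust_2[of j] by (auto simp: norm_eq_sqrt_inner inner_vec_def sum_2 mat_def)
  ultimately show ?thesis using Nil by simp
next
  case (Cons i w')
  let ?P = "mp A w'"
  have i: "i \<in> {1..k}" and w': "set w' \<subseteq> {1..k}" using w Cons by auto
  note P = mp_nonneg[OF w']
  have e: "(A i ** ?P) $ r $ c = A i $ r $ 1 * ?P $ 1 $ c + A i $ r $ 2 * ?P $ 2 $ c" for r c
    by (simp add: matrix_matrix_mult_def sum_2)
  have rat: "A i $ j $ l \<le> KK A k * A i $ j' $ l" for l
    using KK_ratio[OF i, where r=j and c=l and r'=j' and c'=l] pos[OF i, of j' l] by (simp add: divide_le_eq)
  have "norm ((A i ** ?P) $ j) \<le> norm (KK A k *\<^sub>R (A i ** ?P) $ j')"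
  proof (rule norm_mono2)
    fix c
    show "0 \<le> (A i ** ?P) $ j $ c" unfolding e using P pos[OF i]
      by (intro add_nonneg_nonneg mult_nonneg_nonneg) (auto intro: less_imp_le)
    have "A i $ j $ 1 * ?P $ 1 $ c \<le> KK A k * A i $ j' $ 1 * ?P $ 1 $ c"
      using rat[of 1] P by (intro mult_right_mono) auto
    moreover have "A i $ j $ 2 * ?P $ 2 $ c \<le> KK A k * A i $ j' $ 2 * ?P $ 2 $ c"
      using rat[of 2] P by (intro mult_right_mono) auto
    ultimately show "(A i ** ?P) $ j $ c \<le> (KK A k *\<^sub>R (A i ** ?P) $ j') $ c"
      by (simp add: e algebra_simps)
  qed
  moreover have "0 \<le> KK A k" using KK_ge1[OF i] by simp
  ultimately show ?thesis using Cons by simp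
qed

end

context
  fixes A :: "nat \<Rightarrow> real^2^2" and k :: nat
  assumes pos: "\<And>i r c. i \<in> {1..k} \<Longrightarrow> A i $ r $ c > 0"
begin

lemma core:
  assumes w: "set w \<subseteq> {1..k}" and k: "1 \<le> k"
    and x: "norm x = 1" "\<And>c. 0 \<le> (x::real^2) $ c"
    and y: "norm y = 1" "\<And>c. 0 \<le> (y::real^2) $ c"
  shows "norm (x v* mp A w) \<le> (1 + 4 * KK A k * norm (x - y)) * norm (y v* mp A w)"
    and "0 < norm (y v* mp A w)"
proof -
  define M where "M = mp A w"
  define K where "K = KK A k"
  define R1 where "R1 = norm (M $ 1)"
  define R2 where "R2 = norm (M $ 2)"
  define N where "N = norm (y v* M)"
  define m where "m = min R1 R2"
  have K1: "1 \<le> K" using KK_ge1[where A=A and k=k, OF pos, where i=1] k by (simp add: K_def)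
  note MM = mp_nonneg[where A=A and k=k, OF pos w]
  have Mnn: "0 \<le> M $ r $ c" for r c using MM by (simp add: M_def)
  have Mr: "M $ r \<noteq> 0" for r
  proof
    assume "M $ r = 0"
    then have "M $ r $ 1 + M $ r $ 2 = 0" by simp
    moreover have "0 < M $ r $ 1 + M $ r $ 2" using MM by (simp add: M_def[symmetric])
    ultimately show False by simp
  qed
  have R1p: "0 < R1" and R2p: "0 < R2" using Mr by (auto simp: R1_def R2_def)
  have mp: "0 < m" using R1p R2p by (simp add: m_def)
  have R12: "R1 \<le> K * R2" "R2 \<le> K * R1"
    using mp_rows[where A=A and k=k, OF pos w k] by (auto simp: R1_def R2_def K_def M_def)
  have "R1 \<le> K * R1" "R2 \<le> K * R2" using K1 R1p R2p by auto
  then have R1m: "R1 \<le> K * m" and R2m: "R2 \<le> K * m" using R12 by (auto simp: m_def min_def)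
  have yv: "y v* M = y $ 1 *\<^sub>R M $ 1 + y $ 2 *\<^sub>R M $ 2" by (rule vmult2)
  have N1: "y $ 1 * R1 \<le> N"
  proof -
    have "norm (y $ 1 *\<^sub>R M $ 1) \<le> N" unfolding N_def yv
      by (rule norm_mono2) (use y(2) Mnn in \<open>auto intro: mult_nonneg_nonneg\<close>)
    then show ?thesis using y(2)[of 1] by (simp add: R1_def)
  qed
  have N2: "y $ 2 * R2 \<le> N"
  proof -
    have "norm (y $ 2 *\<^sub>R M $ 2) \<le> N" unfolding N_def yv
      by (rule norm_mono2) (use y(2) Mnn in \<open>auto intro: mult_nonneg_nonneg\<close>)
    then show ?thesis using y(2)[of 2] by (simp add: R2_def)
  qed
  have "y $ 1 * m \<le> y $ 1 * R1" "y $ 2 * m \<le> y $ 2 * R2"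
    using y(2) by (auto intro: mult_left_mono simp: m_def)
  moreover have "1 * m \<le> (y $ 1 + y $ 2) * m"
    using unit_sum_ge1[OF y] mp by (intro mult_right_mono) auto
  ultimately have mN: "m \<le> 2 * N" using N1 N2 by (simp add: algebra_simps)
  have "0 < N" using mN mp by linarith
  then show "0 < norm (y v* mp A w)" by (simp add: N_def M_def)
  have dv: "(x - y) v* M = (x $ 1 - y $ 1) *\<^sub>R M $ 1 + (x $ 2 - y $ 2) *\<^sub>R M $ 2"
    by (simp add: vmult2)
  have "norm ((x - y) v* M) \<le> \<bar>x $ 1 - y $ 1\<bar> * R1 + \<bar>x $ 2 - y $ 2\<bar> * R2"
    unfolding dv R1_def R2_def by (rule order_trans[OF norm_triangle_ineq]) simp
  also have "\<dots> \<le> norm (x - y) * R1 + norm (x - y) * R2"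
    using component_le_norm_cart[of "x - y" 1] component_le_norm_cart[of "x - y" 2] R1p R2p
    by (intro add_mono mult_right_mono) auto
  also have "\<dots> \<le> norm (x - y) * (K * m) + norm (x - y) * (K * m)"
    using R1m R2m by (intro add_mono mult_left_mono) auto
  also have "\<dots> = norm (x - y) * K * (2 * m)" by (simp add: algebra_simps)
  also have "\<dots> \<le> norm (x - y) * K * (4 * N)"
    using mN K1 by (intro mult_left_mono) auto
  finally have d: "norm ((x - y) v* M) \<le> 4 * K * norm (x - y) * N" by (simp add: algebra_simps)
  have "x v* M = y v* M + (x - y) v* M" by (simp add: vector_matrix_mult_diff_distrib)
  then have "norm (x v* M) \<le> N + norm ((x - y) v* M)" unfolding N_def by (metis norm_triangle_ineq)
  also have "\<dots> \<le> (1 + 4 * K * norm (x - y)) * N" using d by (simp add: algebra_simps)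
  finally show "norm (x v* mp A w) \<le> (1 + 4 * KK A k * norm (x - y)) * norm (y v* mp A w)"
    by (simp add: M_def K_def N_def)
qed

end

lemma Q2_sign:
  assumes "t \<in> Q2"
  shows "(\<forall>c. 0 \<le> normvec t $ c) \<or> (\<forall>c. normvec t $ c \<le> 0)"
proof -
  have "(cos t \<le> 0 \<and> sin t \<ge> 0) \<or> (cos t \<ge> 0 \<and> sin t \<le> 0)"
    using assms unfolding Q2_def by (auto dest: spec[of _ 1])
  then show ?thesis by (auto simp: forall_2 normvec_def)
qed

lemma normvec_shift:
  "normvec (x + of_int j * pi) = normvec x \<or> normvec (x + of_int j * pi) = - normvec x"
proof -
  have s: "sin (of_int j * pi) = 0" by (auto simp: sin_zero_iff_int2)
  then have "(cos (of_int j * pi))^2 = 1" using sin_cos_squared_add[of "of_int j * pi"] by simp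
  then have "cos (of_int j * pi) = 1 \<or> cos (of_int j * pi) = -1" by (simp add: power2_eq_1_iff)
  then show ?thesis
    by (auto simp: normvec_def vec_eq_iff forall_2 sin_add cos_add s)
qed

lemma chord: "norm (normvec a - normvec b) \<le> \<bar>a - b\<bar>"
proof -
  have v: "normvec a - normvec b = vector [- (sin a - sin b), cos a - cos b]"
    by (simp add: normvec_def vec_eq_iff forall_2)
  have "(norm (normvec a - normvec b))^2 = (normvec a - normvec b) \<bullet> (normvec a - normvec b)"
    by (simp only: power2_norm_eq_inner)
  also have "\<dots> = (sin a - sin b)^2 + (cos a - cos b)^2"
    by (simp add: v inner_vec_def sum_2 power2_eq_square algebra_simps)
  also have "\<dots> = 4 * (sin ((a - b) / 2))^2"
  proof -
    define S where "S = sin ((a - b) / 2)"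
    define Cp where "Cp = cos ((a + b) / 2)"
    define Sp where "Sp = sin ((a + b) / 2)"
    have m: "sin ((b - a) / 2) = - S"
      unfolding S_def by (metis minus_diff_eq minus_divide_left sin_minus)
    have "(sin a - sin b)^2 + (cos a - cos b)^2 = (2 * S * Cp)^2 + (2 * Sp * (- S))^2"
      unfolding sin_diff_sin cos_diff_cos m by (simp add: S_def Cp_def Sp_def)
    also have "\<dots> = 4 * S^2 * (Sp^2 + Cp^2)" by (simp add: power2_eq_square algebra_simps)
    also have "Sp^2 + Cp^2 = 1" unfolding Sp_def Cp_def by (rule sin_cos_squared_add)
    finally show ?thesis by (simp add: S_def)
  qed
  also have "\<dots> \<le> 4 * ((a - b) / 2)^2"
  proof -
    have "\<bar>sin ((a - b) / 2)\<bar>^2 \<le> \<bar>(a - b) / 2\<bar>^2"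
      by (rule power_mono[OF abs_sin_x_le_abs_x]) simp
    then show ?thesis by (simp only: power2_abs)
  qed
  also have "\<dots> = \<bar>a - b\<bar>^2" by (simp add: power2_eq_square field_simps)
  finally show ?thesis by (rule power2_le_imp_le) simp
qed

lemma neg_vm: "norm ((- x) v* (M::real^2^2)) = norm (x v* M)"
proof -
  have "(- x) v* M = - (x v* M)" by (simp add: vec_eq_iff vector_matrix_mult_def sum_negf)
  then show ?thesis by simp
qed

lemma opp:
  fixes x y :: "real^2"
  assumes "\<And>c. 0 \<le> x $ c" "\<And>c. y $ c \<le> 0" "norm x = 1"
  shows "1 \<le> norm (x - y)"
proof -
  have "x \<bullet> y \<le> 0"
    using assms(1)[of 1] assms(1)[of 2] assms(2)[of 1] assms(2)[of 2]
    by (simp add: inner_vec_def sum_2 add_nonpos_nonpos mult_nonneg_nonpos)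
  moreover have "0 \<le> y \<bullet> y" by simp
  moreover have "(x - y) \<bullet> (x - y) = x \<bullet> x - 2 * (x \<bullet> y) + y \<bullet> y"
    by (simp add: inner_diff_left inner_diff_right inner_commute)
  ultimately have "x \<bullet> x \<le> (x - y) \<bullet> (x - y)" by linarith
  then have "norm x \<le> norm (x - y)" by (simp add: norm_le)
  then show ?thesis using assms(3) by simp
qed

lemma sign_cases:
  fixes x :: "real^2"
  assumes "(\<forall>c. 0 \<le> x $ c) \<or> (\<forall>c. x $ c \<le> 0)"
  obtains s where "s = 1 \<or> s = -1" "\<And>c. 0 \<le> (s *\<^sub>R x) $ c"
  using assms
proof
  assume "\<forall>c. 0 \<le> x $ c" then show ?thesis using that[of 1] by simp
next
  assume "\<forall>c. x $ c \<le> 0" then show ?thesis using that[of "-1"] by simp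
qed

context
  fixes A :: "nat \<Rightarrow> real^2^2" and k :: nat
  assumes pos: "\<And>i r c. i \<in> {1..k} \<Longrightarrow> A i $ r $ c > 0"
begin

lemma gen:
  assumes w: "set w \<subseteq> {1..k}" and k: "1 \<le> k"
    and x: "norm x = 1" "(\<forall>c. 0 \<le> (x::real^2) $ c) \<or> (\<forall>c. x $ c \<le> 0)"
    and y: "norm y = 1" "(\<forall>c. 0 \<le> (y::real^2) $ c) \<or> (\<forall>c. y $ c \<le> 0)"
  shows "norm (x v* mp A w) \<le> (1 + 8 * KK A k * norm (x - y)) * norm (y v* mp A w)"
    and "0 < norm (y v* mp A w)"
proof -
  obtain s where s: "s = 1 \<or> s = -1" "\<And>c. 0 \<le> (s *\<^sub>R x) $ c" using sign_cases[OF x(2)] by blast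
  obtain t where t: "t = 1 \<or> t = -1" "\<And>c. 0 \<le> (t *\<^sub>R y) $ c" using sign_cases[OF y(2)] by blast
  have nx: "norm (s *\<^sub>R x) = 1" using s x by auto
  have ny: "norm (t *\<^sub>R y) = 1" using t y by auto
  note co = core[where A=A and k=k, OF pos w k nx s(2) ny t(2)]
  have ex: "norm ((s *\<^sub>R x) v* mp A w) = norm (x v* mp A w)" using s neg_vm[of x] by auto
  have ey: "norm ((t *\<^sub>R y) v* mp A w) = norm (y v* mp A w)" using t neg_vm[of y] by auto
  show "0 < norm (y v* mp A w)" using co(2) ey by simp
  have K1: "1 \<le> KK A k" using KK_ge1[where A=A and k=k, OF pos, where i=1] k by simp
  have e: "norm (s *\<^sub>R x - t *\<^sub>R y) \<le> 2 * norm (x - y)"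
  proof (cases "s = t")
    case True then show ?thesis using s by (auto simp: norm_minus_commute)
  next
    case False
    have "norm (s *\<^sub>R x - t *\<^sub>R y) \<le> norm (s *\<^sub>R x) + norm (t *\<^sub>R y)" by (rule norm_triangle_ineq4)
    also have "\<dots> = 2" using nx ny by simp
    also have "2 \<le> 2 * norm (x - y)"
    proof -
      have st: "t = - s" using s t False by auto
      have "1 \<le> norm (s *\<^sub>R x - (- (t *\<^sub>R y)))"
      proof (rule opp[OF s(2) _ nx])
        fix c show "(- (t *\<^sub>R y)) $ c \<le> 0" using t(2)[of c] by simp
      qed
      also have "norm (s *\<^sub>R x - (- (t *\<^sub>R y))) = norm (x - y)" using st s
        by (auto simp: algebra_simps norm_minus_commute)
      finally show ?thesis by simp
    qed
    finally show ?thesis .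
  qed
  have "norm (x v* mp A w) \<le> (1 + 4 * KK A k * norm (s *\<^sub>R x - t *\<^sub>R y)) * norm (y v* mp A w)"
    using co(1) ex ey by simp
  also have "\<dots> \<le> (1 + 8 * KK A k * norm (x - y)) * norm (y v* mp A w)"
  proof (rule mult_right_mono)
    have "4 * KK A k * norm (s *\<^sub>R x - t *\<^sub>R y) \<le> 4 * KK A k * (2 * norm (x - y))"
      using e K1 by (intro mult_left_mono) auto
    then show "1 + 4 * KK A k * norm (s *\<^sub>R x - t *\<^sub>R y) \<le> 1 + 8 * KK A k * norm (x - y)" by simp
  qed simp
  finally show "norm (x v* mp A w) \<le> (1 + 8 * KK A k * norm (x - y)) * norm (y v* mp A w)" .
qed

end

theorem lemma5p1:
  fixes k :: nat and A :: "nat \<Rightarrow> real^2^2" and d :: "nat \<Rightarrow> real^2"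
  assumes pos: "\<And>i r c. i \<in> {1..k} \<Longrightarrow> A i $ r $ c > 0"
    and nrm: "\<And>i. i \<in> {1..k} \<Longrightarrow> onorm (\<lambda>x. A i *v x) < 1"
    and inv: "\<And>i. i \<in> {1..k} \<Longrightarrow> affT A d i ` Disc \<subseteq> Disc"
  shows "\<exists>C. \<forall>\<theta> \<theta>' n (a :: nat \<Rightarrow> nat).
           \<theta> \<in> Q2 \<longrightarrow> \<theta>' \<in> Q2 \<longrightarrow> (\<forall>j. a j \<in> {1..k}) \<longrightarrow>
           wlen A d (map a [1..<n+1]) \<theta> - wlen A d (map a [1..<n+1]) \<theta>' \<le> C * angdist \<theta> \<theta>'"
proof (intro exI allI impI)
  define K where "K = KK A k"
  define C where "C = 8 * K / ln 2"
  fix \<theta> \<theta>' :: real and n :: nat and a :: "nat \<Rightarrow> nat"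
  assume th: "\<theta> \<in> Q2" and th': "\<theta>' \<in> Q2" and a: "\<forall>j. a j \<in> {1..k}"
  define w where "w = map a [1..<n+1]"
  have w: "set w \<subseteq> {1..k}" using a by (auto simp: w_def)
  have k: "1 \<le> k" using a[rule_format, of 0] by simp
  have K1: "1 \<le> K" using KK_ge1[where A=A and k=k, OF pos, where i=1] k by (simp add: K_def)
  have ln2: "0 < ln (2::real)" by simp
  have Cp: "0 < C" using K1 ln2 by (simp add: C_def)
  define N where "N = norm (normvec \<theta> v* mp A w)"
  define N' where "N' = norm (normvec \<theta>' v* mp A w)"
  have L: "wlen A d w \<theta> - wlen A d w \<theta>' = (ln N' - ln N) / ln 2"
    by (simp add: wlen_eq N_def N'_def log_def diff_divide_distrib)
  have main: "(ln N' - ln N) / ln 2 \<le> C * \<bar>\<theta> - \<theta>' - of_int j * pi\<bar>" for j :: int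
  proof -
    define x where "x = normvec (\<theta>' + of_int j * pi)"
    define y where "y = normvec \<theta>"
    have xs: "x = normvec \<theta>' \<or> x = - normvec \<theta>'" unfolding x_def by (rule normvec_shift)
    have xn: "norm x = 1" using xs norm_normvec[of \<theta>'] by auto
    have xsg: "(\<forall>c. 0 \<le> x $ c) \<or> (\<forall>c. x $ c \<le> 0)"
      using xs Q2_sign[OF th'] by (auto simp: forall_2)
    have yn: "norm y = 1" by (simp add: y_def norm_normvec)
    have ysg: "(\<forall>c. 0 \<le> y $ c) \<or> (\<forall>c. y $ c \<le> 0)" unfolding y_def by (rule Q2_sign[OF th])
    note g = gen[where A=A and k=k, OF pos w k xn xsg yn ysg]
    note g' = gen[where A=A and k=k, OF pos w k yn ysg xn xsg]
    have Nx: "norm (x v* mp A w) = N'" using xs neg_vm[of "normvec \<theta>'" "mp A w"] by (auto simp: N'_def)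
    have Ny: "norm (y v* mp A w) = N" by (simp add: N_def y_def)
    define D where "D = norm (x - y)"
    have D: "D \<le> \<bar>\<theta> - \<theta>' - of_int j * pi\<bar>"
      using chord[of "\<theta>' + of_int j * pi" \<theta>] unfolding D_def x_def y_def by (simp add: abs_minus_commute algebra_simps)
    have Np: "0 < N" and N'p: "0 < N'" using g(2) g'(2) Nx Ny by auto
    have le: "N' \<le> (1 + 8 * K * D) * N" using g(1) Nx Ny by (simp add: K_def D_def)
    have D0: "0 \<le> D" by (simp add: D_def)
    have "ln N' \<le> ln ((1 + 8 * K * D) * N)" using le N'p by simp
    also have "\<dots> = ln (1 + 8 * K * D) + ln N"
    proof -
      have "0 < 1 + 8 * K * D" using K1 D0 by (simp add: add_pos_nonneg)
      then show ?thesis using Np by (simp add: ln_mult)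
    qed
    finally have "ln N' - ln N \<le> ln (1 + 8 * K * D)" by simp
    also have "\<dots> \<le> 8 * K * D" using K1 D0 by (intro ln_add_one_self_le_self) simp
    finally have "(ln N' - ln N) / ln 2 \<le> 8 * K * D / ln 2" using ln2 by (simp add: divide_right_mono)
    also have "\<dots> = C * D" by (simp add: C_def)
    also have "\<dots> \<le> C * \<bar>\<theta> - \<theta>' - of_int j * pi\<bar>" using Cp D by simp
    finally show ?thesis .
  qed
  have "(ln N' - ln N) / ln 2 / C \<le> angdist \<theta> \<theta>'"
    unfolding angdist_def
  proof (rule cINF_greatest)
    show "(UNIV :: int set) \<noteq> {}" by simp
    fix j :: int
    show "(ln N' - ln N) / ln 2 / C \<le> \<bar>\<theta> - \<theta>' - of_int j * pi\<bar>"
      using main[of j] Cp by (simp add: divide_le_eq mult_ac)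
  qed
  then have "(ln N' - ln N) / ln 2 \<le> C * angdist \<theta> \<theta>'" using Cp by (simp add: divide_le_eq mult_ac)
  then show "wlen A d (map a [1..<n+1]) \<theta> - wlen A d (map a [1..<n+1]) \<theta>' \<le> C * angdist \<theta> \<theta>'"
    using L by (simp add: w_def)
qed

end
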